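(* Let $f\in\mathbb{R}[x_1,\ldots,x_n]$ be a homogeneous cubic polynomial (homogeneous of degree $3$) which is irreducible in $\mathbb{R}[x_1,\ldots,x_n]$, $f\not\equiv 0$. Then the zero set $\mathcal{F}(f)=f^{-1}(0)\subset\mathbb{R}^n$ contains a regular point of $f$, i.e. a point $x\in\mathbb{R}^n$ with $f(x)=0$ and $\nabla f(x)\neq 0$.
   Context: $\mathcal{F}(f):=\{x\in\mathbb{R}^n: f(x)=0\}$ denotes the zero set of $f$ in $\mathbb{R}^n$. *)

theory Defs
  imports "HOL-Analysis.Analysis" "HOL-Library.Poly_Mapping"
    "HOL-Computational_Algebra.Factorial_Ring"
begin

text \<open>Real polynomials in the variables indexed by the finite type 'n:
  a polynomial is a finitely supported map from monomials (exponent vectors) to real coefficients.  With 'n linearly ordered this type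
  is an integral domain (instance from Poly_Mapping), i.e. the ring
  R[x_i : i in 'n].\<close>

type_synonym 'n rpoly = "('n \<Rightarrow>\<^sub>0 nat) \<Rightarrow>\<^sub>0 real"

definition rpoly_eval :: "('n::finite) rpoly \<Rightarrow> real ^ 'n \<Rightarrow> real" where
  "rpoly_eval f x = (\<Sum>(m::'n \<Rightarrow>\<^sub>0 nat)\<in>Poly_Mapping.keys f. Poly_Mapping.lookup f m * (\<Prod>i\<in>UNIV. (x $ i) ^ Poly_Mapping.lookup m i))"

definition mon_deg :: "('n::finite \<Rightarrow>\<^sub>0 nat) \<Rightarrow> nat" where
  "mon_deg m = (\<Sum>i\<in>UNIV. Poly_Mapping.lookup m i)"

definition homogeneous_of_degree :: "('n::finite) rpoly \<Rightarrow> nat \<Rightarrow> bool" where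
  "homogeneous_of_degree f d \<longleftrightarrow> (\<forall>m\<in>Poly_Mapping.keys f. mon_deg m = d)"

definition rpoly_pderiv :: "'n \<Rightarrow> ('n::finite) rpoly \<Rightarrow> 'n rpoly" where
  "rpoly_pderiv i f =
     (\<Sum>(m::'n \<Rightarrow>\<^sub>0 nat)\<in>Poly_Mapping.keys f. Poly_Mapping.single (m - Poly_Mapping.single i 1)
                     (Poly_Mapping.lookup f m * of_nat (Poly_Mapping.lookup m i)))"

definition rpoly_grad :: "('n::finite) rpoly \<Rightarrow> real ^ 'n \<Rightarrow> real ^ 'n" where
  "rpoly_grad f x = (\<chi> i. rpoly_eval (rpoly_pderiv i f) x)"

definition zero_set :: "('n::finite) rpoly \<Rightarrow> (real ^ 'n) set" where
  "zero_set f = {x. rpoly_eval f x = 0}"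

end

theory Submission
  imports Defs "HOL-Computational_Algebra.Polynomial"
begin

definition mono :: "('n::finite \<Rightarrow>\<^sub>0 nat) \<Rightarrow> real^'n \<Rightarrow> real" where
  "mono m x = (\<Prod>i\<in>UNIV. (x$i) ^ Poly_Mapping.lookup m i)"

lemma eval_superset:
  fixes f :: "('n::finite) rpoly"
  assumes "finite S" "Poly_Mapping.keys f \<subseteq> S"
  shows "rpoly_eval f x = (\<Sum>m\<in>S. Poly_Mapping.lookup f m * mono m x)"
  unfolding rpoly_eval_def mono_def
  by (rule sum.mono_neutral_left) (use assms in \<open>auto simp: in_keys_iff\<close>)

lemma eval_add: "rpoly_eval (f + g) x = rpoly_eval f x + rpoly_eval (g::('n::finite) rpoly) x"
proof -
  let ?S = "Poly_Mapping.keys f \<union> Poly_Mapping.keys g"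
  have "Poly_Mapping.keys (f+g) \<subseteq> ?S" by (rule keys_add)
  then show ?thesis
    by (simp add: eval_superset[of ?S] lookup_add distrib_right sum.distrib)
qed

lemma eval_uminus: "rpoly_eval (- f) x = - rpoly_eval (f::('n::finite) rpoly) x"
  by (simp add: eval_superset[of "Poly_Mapping.keys f"] sum_negf)

lemma eval_diff: "rpoly_eval (f - g) x = rpoly_eval f x - rpoly_eval (g::('n::finite) rpoly) x"
  using eval_add[of f "-g" x] by (simp add: eval_uminus)

lemma eval_zero[simp]: "rpoly_eval (0::('n::finite) rpoly) x = 0"
  by (simp add: rpoly_eval_def)

lemma eval_single: "rpoly_eval (Poly_Mapping.single m c :: ('n::finite) rpoly) x = c * mono m x"
  by (simp add: eval_superset[of "{m}"] lookup_single)

lemma eval_sum: "rpoly_eval (\<Sum>a\<in>A. F a :: ('n::finite) rpoly) x = (\<Sum>a\<in>A. rpoly_eval (F a) x)"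
  by (induction A rule: infinite_finite_induct) (auto simp: eval_add)

lemma decomp: "(f::('a \<Rightarrow>\<^sub>0 'b::comm_monoid_add)) = (\<Sum>m\<in>Poly_Mapping.keys f. Poly_Mapping.single m (Poly_Mapping.lookup f m))"
  by (rule poly_mapping_eqI) (auto simp: lookup_sum lookup_single when_def in_keys_iff)

lemma mono_add: "mono (m + n) x = mono m x * mono n x"
  by (simp add: mono_def lookup_add power_add prod.distrib)

lemma eval_mult: "rpoly_eval (f * g) x = rpoly_eval f x * rpoly_eval (g::('n::{finite,linorder}) rpoly) x"
proof -
  have "f * g = (\<Sum>m\<in>Poly_Mapping.keys f. Poly_Mapping.single m (Poly_Mapping.lookup f m)) * (\<Sum>n\<in>Poly_Mapping.keys g. Poly_Mapping.single n (Poly_Mapping.lookup g n))"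
    using decomp[of f] decomp[of g] by simp
  also have "\<dots> = (\<Sum>m\<in>Poly_Mapping.keys f. \<Sum>n\<in>Poly_Mapping.keys g. Poly_Mapping.single (m+n) (Poly_Mapping.lookup f m * Poly_Mapping.lookup g n))"
    by (simp add: sum_distrib_left sum_distrib_right mult_single sum.swap[of _ "Poly_Mapping.keys g"])
  finally have "rpoly_eval (f*g) x = (\<Sum>m\<in>Poly_Mapping.keys f. \<Sum>n\<in>Poly_Mapping.keys g. Poly_Mapping.lookup f m * mono m x * (Poly_Mapping.lookup g n * mono n x))"
    by (simp add: eval_sum eval_single mono_add mult_ac)
  also have "\<dots> = rpoly_eval f x * rpoly_eval g x"
    by (simp add: rpoly_eval_def mono_def sum_product)
  finally show ?thesis .
qed

lemma eval_one: "rpoly_eval (1::('n::{finite,linorder}) rpoly) x = 1"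
  using eval_single[of 0 1 x] by (simp add: mono_def)

lemma unit_eval: assumes "(u::('n::{finite,linorder}) rpoly) dvd 1" shows "rpoly_eval u x \<noteq> 0"
proof -
  from assms obtain v where "1 = u * v" by (auto elim: dvdE)
  then have "1 = rpoly_eval u x * rpoly_eval v x" by (metis eval_mult eval_one)
  then show ?thesis by auto
qed

lemma mono_minus:
  assumes "Poly_Mapping.lookup m j > 0"
  shows "mono (m - Poly_Mapping.single j 1) z = (z$j)^(Poly_Mapping.lookup m j - 1) * (\<Prod>i\<in>UNIV-{j}. (z$i)^Poly_Mapping.lookup m i)"
proof -
  have "mono (m - Poly_Mapping.single j 1) z = (z$j)^(Poly_Mapping.lookup (m - Poly_Mapping.single j 1) j) * (\<Prod>i\<in>UNIV-{j}. (z$i)^Poly_Mapping.lookup (m - Poly_Mapping.single j 1) i)"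
    unfolding mono_def by (simp add: prod.remove[of UNIV j])
  also have "\<dots> = (z$j)^(Poly_Mapping.lookup m j - 1) * (\<Prod>i\<in>UNIV-{j}. (z$i)^Poly_Mapping.lookup m i)"
    by (auto simp: lookup_minus lookup_single intro!: prod.cong)
  finally show ?thesis .
qed

lemma mono_deriv:
  "((\<lambda>s. mono m (s *\<^sub>R v + w)) has_real_derivative
     (\<Sum>j\<in>UNIV. v$j * (of_nat (Poly_Mapping.lookup m j) * mono (m - Poly_Mapping.single j 1) (s *\<^sub>R v + w)))) (at s)"
proof -
  let ?z = "s *\<^sub>R v + w"
  have d: "((\<lambda>u. (u * v$j + w$j) ^ Poly_Mapping.lookup m j) has_real_derivative
       of_nat (Poly_Mapping.lookup m j) * (s * v$j + w$j)^(Poly_Mapping.lookup m j - 1) * v$j) (at s)" for j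
    by (auto intro!: derivative_eq_intros)
  have "((\<lambda>u. \<Prod>j\<in>UNIV. (u * v$j + w$j) ^ Poly_Mapping.lookup m j) has_real_derivative
     (\<Sum>j\<in>UNIV. of_nat (Poly_Mapping.lookup m j) * (s * v$j + w$j)^(Poly_Mapping.lookup m j - 1) * v$j
        * (\<Prod>i\<in>UNIV-{j}. (s * v$i + w$i) ^ Poly_Mapping.lookup m i))) (at s)"
    by (rule has_field_derivative_prod) (rule d)
  moreover have "of_nat (Poly_Mapping.lookup m j) * (s * v$j + w$j)^(Poly_Mapping.lookup m j - 1) * v$j
        * (\<Prod>i\<in>UNIV-{j}. (s * v$i + w$i) ^ Poly_Mapping.lookup m i)
       = v$j * (of_nat (Poly_Mapping.lookup m j) * mono (m - Poly_Mapping.single j 1) ?z)" (is "?L j = ?R j") for j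
  proof (cases "Poly_Mapping.lookup m j = 0")
    case False
    have "mono (m - Poly_Mapping.single j 1) ?z = (?z$j)^(Poly_Mapping.lookup m j - 1) * (\<Prod>i\<in>UNIV-{j}. (?z$i)^Poly_Mapping.lookup m i)"
      by (rule mono_minus) (use False in simp)
    then show ?thesis by (simp add: mult_ac)
  qed simp
  ultimately have "((\<lambda>u. \<Prod>j\<in>UNIV. (u * v$j + w$j) ^ Poly_Mapping.lookup m j) has_real_derivative
     (\<Sum>j\<in>UNIV. ?R j)) (at s)" by (metis (no_types, lifting) sum.cong)
  moreover have "(\<lambda>s. mono m (s *\<^sub>R v + w)) = (\<lambda>u. \<Prod>j\<in>UNIV. (u * v$j + w$j) ^ Poly_Mapping.lookup m j)"
    by (simp add: mono_def fun_eq_iff)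
  ultimately show ?thesis by simp
qed

lemma eval_pderiv: "rpoly_eval (rpoly_pderiv j g) z =
   (\<Sum>m\<in>Poly_Mapping.keys g. Poly_Mapping.lookup g m * (of_nat (Poly_Mapping.lookup m j) * mono (m - Poly_Mapping.single j 1) z))"
  unfolding rpoly_pderiv_def by (simp add: eval_sum eval_single mult_ac)

lemma eval_deriv:
  "((\<lambda>s. rpoly_eval (g::('n::finite) rpoly) (s *\<^sub>R v + w)) has_real_derivative
     (\<Sum>j\<in>UNIV. v$j * rpoly_eval (rpoly_pderiv j g) (s *\<^sub>R v + w))) (at s)"
proof -
  have "((\<lambda>s. \<Sum>m\<in>Poly_Mapping.keys g. Poly_Mapping.lookup g m * mono m (s *\<^sub>R v + w)) has_real_derivative
     (\<Sum>m\<in>Poly_Mapping.keys g. Poly_Mapping.lookup g m * (\<Sum>j\<in>UNIV. v$j * (of_nat (Poly_Mapping.lookup m j) * mono (m - Poly_Mapping.single j 1) (s *\<^sub>R v + w))))) (at s)"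
    by (auto intro!: derivative_eq_intros mono_deriv simp: mult.commute)
  moreover have "(\<Sum>m\<in>Poly_Mapping.keys g. Poly_Mapping.lookup g m * (\<Sum>j\<in>UNIV. v$j * (of_nat (Poly_Mapping.lookup m j) * mono (m - Poly_Mapping.single j 1) (s *\<^sub>R v + w))))
     = (\<Sum>j\<in>UNIV. v$j * rpoly_eval (rpoly_pderiv j g) (s *\<^sub>R v + w))"
    by (simp add: eval_pderiv sum_distrib_left sum.swap[of _ UNIV] mult_ac)
  ultimately show ?thesis by (simp add: eval_superset[of "Poly_Mapping.keys g"])
qed

lemma minus_add_single:
  assumes "Poly_Mapping.lookup (m::'a \<Rightarrow>\<^sub>0 nat) j > 0"
  shows "m - Poly_Mapping.single j 1 + Poly_Mapping.single j 1 = m"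
  by (rule poly_mapping_eqI) (use assms in \<open>auto simp: lookup_add lookup_minus lookup_single when_def\<close>)

lemma lookup_pderiv:
  "Poly_Mapping.lookup (rpoly_pderiv j (g::('n::finite) rpoly)) m' =
     Poly_Mapping.lookup g (m' + Poly_Mapping.single j 1) * of_nat (Poly_Mapping.lookup m' j + 1)"
proof -
  let ?M = "m' + Poly_Mapping.single j 1"
  have t: "(Poly_Mapping.lookup g m * of_nat (Poly_Mapping.lookup m j) when m - Poly_Mapping.single j 1 = m')
     = (if m = ?M then Poly_Mapping.lookup g m * of_nat (Poly_Mapping.lookup m j) else 0)" for m
  proof (cases "Poly_Mapping.lookup m j > 0")
    case True
    then have "m - Poly_Mapping.single j 1 = m' \<longleftrightarrow> m = ?M"
      using minus_add_single[OF True] by (metis add_diff_cancel_right')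
    then show ?thesis by (simp add: when_def)
  next
    case False
    then have "m \<noteq> ?M" by (auto simp: lookup_add)
    then show ?thesis using False by (simp add: when_def)
  qed
  have "Poly_Mapping.lookup (rpoly_pderiv j g) m' = (\<Sum>m\<in>Poly_Mapping.keys g.
      (if m = ?M then Poly_Mapping.lookup g m * of_nat (Poly_Mapping.lookup m j) else 0))"
    unfolding rpoly_pderiv_def lookup_sum lookup_single using t by simp
  also have "\<dots> = Poly_Mapping.lookup g ?M * of_nat (Poly_Mapping.lookup ?M j)"
    by (simp add: in_keys_iff)
  finally show ?thesis by (simp add: lookup_add)
qed

lemma deriv_zero:
  assumes "\<forall>x. rpoly_eval (g::('n::finite) rpoly) x = 0"
  shows "rpoly_eval (rpoly_pderiv j g) x = 0"
proof -
  have "((\<lambda>s. rpoly_eval g (s *\<^sub>R axis j 1 + x)) has_real_derivative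
     (\<Sum>i\<in>UNIV. axis j 1 $ i * rpoly_eval (rpoly_pderiv i g) (0 *\<^sub>R axis j 1 + x))) (at 0)"
    by (rule eval_deriv)
  moreover have "(\<Sum>i\<in>UNIV. axis j (1::real) $ i * rpoly_eval (rpoly_pderiv i g) (0 *\<^sub>R axis j 1 + x))
     = rpoly_eval (rpoly_pderiv j g) x"
  proof -
    have "(\<Sum>i\<in>UNIV. axis j (1::real) $ i * rpoly_eval (rpoly_pderiv i g) (0 *\<^sub>R axis j 1 + x))
       = (\<Sum>i\<in>UNIV. if i = j then rpoly_eval (rpoly_pderiv j g) x else 0)"
      by (rule sum.cong) (auto simp: axis_def)
    then show ?thesis by simp
  qed
  ultimately have "((\<lambda>s. 0) has_real_derivative rpoly_eval (rpoly_pderiv j g) x) (at 0)"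
    using assms by simp
  then show ?thesis using DERIV_const DERIV_unique by blast
qed

lemma mon_deg_add: "mon_deg (m + n) = mon_deg m + mon_deg n"
  by (simp add: mon_deg_def lookup_add sum.distrib)

lemma mon_deg_single: "mon_deg (Poly_Mapping.single (j::'n::finite) 1) = 1"
  by (simp add: mon_deg_def lookup_single when_def)

lemma mono_at_zero: "mono m (0::real^'n::finite) = (if m = 0 then 1 else 0)"
proof (cases "m = 0")
  case False
  then obtain j where "Poly_Mapping.lookup m j \<noteq> 0"
    by (metis lookup_zero poly_mapping_eqI)
  then show ?thesis unfolding mono_def by (auto intro!: prod_zero)
qed (simp add: mono_def)

lemma identity_lookup:
  assumes "\<forall>x. rpoly_eval (g::('n::finite) rpoly) x = 0"
  shows "Poly_Mapping.lookup g m = 0"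
  using assms
proof (induction "mon_deg m" arbitrary: m g rule: less_induct)
  case less
  show ?case
  proof (cases "m = 0")
    case True
    have "rpoly_eval g 0 = (\<Sum>m\<in>Poly_Mapping.keys g. Poly_Mapping.lookup g m * (if m = 0 then 1 else 0))"
      using mono_at_zero[where 'n='n] by (simp add: rpoly_eval_def mono_def)
    also have "\<dots> = Poly_Mapping.lookup g 0"
      by (simp add: if_distrib in_keys_iff cong: if_cong)
    finally show ?thesis using less.prems True by simp
  next
    case False
    then obtain j where j: "Poly_Mapping.lookup m j > 0"
      by (metis lookup_zero poly_mapping_eqI neq0_conv)
    define m' where "m' = m - Poly_Mapping.single j 1"
    have mm: "m' + Poly_Mapping.single j 1 = m" using minus_add_single[OF j] m'_def by simp
    have "mon_deg m' < mon_deg m" using mon_deg_add[of m' "Poly_Mapping.single j 1"] mm mon_deg_single[of j] by simp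
    moreover have "\<forall>x. rpoly_eval (rpoly_pderiv j g) x = 0" using deriv_zero less.prems by blast
    ultimately have "Poly_Mapping.lookup (rpoly_pderiv j g) m' = 0" using less.hyps by blast
    then have "Poly_Mapping.lookup g m * of_nat (Poly_Mapping.lookup m' j + 1) = 0"
      using lookup_pderiv[of j g m'] mm by metis
    then show ?thesis by simp
  qed
qed

lemma identity:
  assumes "\<forall>x. rpoly_eval (g::('n::finite) rpoly) x = 0"
  shows "g = 0"
  by (rule poly_mapping_eqI) (simp add: identity_lookup[OF assms])

lemma coeff_mult_bound:
  fixes p q :: "real poly"
  assumes "degree p \<le> a" "degree q \<le> b"
  shows "coeff (p * q) (a + b) = coeff p a * coeff q b"
proof (cases "degree p = a \<and> degree q = b")
  case True
  then show ?thesis using coeff_mult_degree_sum[of p q] by simp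
next
  case False
  then have "degree p < a \<or> degree q < b" using assms by auto
  moreover have "degree (p*q) \<le> degree p + degree q" by (rule degree_mult_le)
  ultimately have "degree (p*q) < a + b" using assms by linarith
  then have "coeff (p*q) (a+b) = 0" by (simp add: coeff_eq_0)
  moreover have "coeff p a * coeff q b = 0"
    using \<open>degree p < a \<or> degree q < b\<close> by (auto simp: coeff_eq_0)
  ultimately show ?thesis by simp
qed

lemma coeff_prod_bound:
  fixes q :: "'a \<Rightarrow> real poly"
  assumes "finite A" "\<And>i. i \<in> A \<Longrightarrow> degree (q i) \<le> d i"
  shows "coeff (\<Prod>i\<in>A. q i) (\<Sum>i\<in>A. d i) = (\<Prod>i\<in>A. coeff (q i) (d i))
     \<and> degree (\<Prod>i\<in>A. q i) \<le> (\<Sum>i\<in>A. d i)"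
  using assms
proof (induction A rule: finite_induct)
  case (insert x A)
  then have h: "coeff (\<Prod>i\<in>A. q i) (\<Sum>i\<in>A. d i) = (\<Prod>i\<in>A. coeff (q i) (d i))"
    "degree (\<Prod>i\<in>A. q i) \<le> (\<Sum>i\<in>A. d i)" "degree (q x) \<le> d x" by auto
  have "degree (q x * (\<Prod>i\<in>A. q i)) \<le> degree (q x) + degree (\<Prod>i\<in>A. q i)" by (rule degree_mult_le)
  then show ?case using insert.hyps h coeff_mult_bound[OF h(3) h(2)] by simp
qed simp

lemma lin_power: "coeff ([:a, b:] ^ k) k = b ^ k \<and> degree ([:a, b::real:] ^ k) \<le> k"
proof (induction k)
  case (Suc k)
  have d: "degree [:a, b:] \<le> 1" by simp
  have "coeff ([:a,b:] * [:a,b:]^k) (1 + k) = coeff [:a,b:] 1 * coeff ([:a,b:]^k) k"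
    by (rule coeff_mult_bound[OF d]) (use Suc in simp)
  then have c: "coeff ([:a,b:]^Suc k) (Suc k) = b^Suc k" using Suc by (simp del: mult_pCons_left)
  have "degree ([:a,b:]^Suc k) \<le> degree [:a,b:] * Suc k" by (rule degree_power_le)
  also have "\<dots> \<le> 1 * Suc k" using d by (rule mult_right_mono) simp
  finally show ?case using c by simp
qed simp

lemma mono_smult: "mono m (t *\<^sub>R x) = t ^ mon_deg m * mono m x"
  by (simp add: mono_def mon_deg_def power_mult_distrib prod.distrib power_sum)

lemma eval_homog:
  assumes "homogeneous_of_degree f 3"
  shows "rpoly_eval f (t *\<^sub>R x) = t^3 * rpoly_eval f x"
proof -
  have "rpoly_eval f (t *\<^sub>R x) = (\<Sum>m\<in>Poly_Mapping.keys f. Poly_Mapping.lookup f m * mono m (t *\<^sub>R x))"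
    by (simp add: eval_superset[of "Poly_Mapping.keys f"])
  also have "\<dots> = (\<Sum>m\<in>Poly_Mapping.keys f. t^3 * (Poly_Mapping.lookup f m * mono m x))"
    by (rule sum.cong) (use assms in \<open>auto simp: mono_smult homogeneous_of_degree_def\<close>)
  also have "\<dots> = t^3 * rpoly_eval f x"
    by (simp add: sum_distrib_left eval_superset[of "Poly_Mapping.keys f"])
  finally show ?thesis .
qed

lemma cubic_rep:
  fixes f :: "('n::finite) rpoly"
  assumes "homogeneous_of_degree f 3"
  shows "\<exists>h0 h1 h2. \<forall>s. rpoly_eval f (s *\<^sub>R p + y) = h0 + h1 * s + h2 * s^2 + rpoly_eval f p * s^3"
proof -
  define T where "T m = (\<Prod>i\<in>UNIV. [:y$i, p$i:] ^ Poly_Mapping.lookup m i)" for m :: "'n \<Rightarrow>\<^sub>0 nat"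
  define H where "H = (\<Sum>m\<in>Poly_Mapping.keys f. smult (Poly_Mapping.lookup f m) (T m))"
  have T: "coeff (T m) (mon_deg m) = mono m p \<and> degree (T m) \<le> mon_deg m" for m
    unfolding T_def mon_deg_def mono_def
    using coeff_prod_bound[of UNIV "\<lambda>i. [:y$i, p$i:] ^ Poly_Mapping.lookup m i" "\<lambda>i. Poly_Mapping.lookup m i"]
    lin_power by simp
  have md: "m \<in> Poly_Mapping.keys f \<Longrightarrow> mon_deg m = 3" for m
    using assms by (simp add: homogeneous_of_degree_def)
  have degH: "degree H \<le> 3"
    unfolding H_def
  proof (rule degree_sum_le)
    fix m assume "m \<in> Poly_Mapping.keys f"
    then show "degree (smult (Poly_Mapping.lookup f m) (T m)) \<le> 3"
      using T[of m] md[of m] degree_smult_le[of "Poly_Mapping.lookup f m" "T m"] by simp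
  qed simp
  have c3: "coeff H 3 = rpoly_eval f p"
    unfolding H_def rpoly_eval_def coeff_sum
    by (simp, rule sum.cong) (use T md in \<open>metis mono_def\<close>)+
  have pT: "poly (T m) s = mono m (s *\<^sub>R p + y)" for m s
    unfolding T_def mono_def by (simp add: poly_prod algebra_simps)
  have pH: "poly H s = rpoly_eval f (s *\<^sub>R p + y)" for s
    unfolding H_def rpoly_eval_def by (simp add: poly_sum pT mono_def)
  have "poly H s = (\<Sum>i\<le>3. coeff H i * s ^ i)" for s
    unfolding poly_altdef
    by (rule sum.mono_neutral_left) (use degH in \<open>auto simp: coeff_eq_0\<close>)
  then have "poly H s = coeff H 0 + coeff H 1 * s + coeff H 2 * s^2 + coeff H 3 * s^3" for s
    by (simp add: numeral_3_eq_3 numeral_2_eq_2 atMost_Suc)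
  then show ?thesis using pH c3 by metis
qed

lemma depressed:
  fixes P R :: real
  assumes h: "\<forall>u. u^3 + P*u + R = 0 \<longrightarrow> 3*u^2 + P = 0"
  shows "P = 0 \<and> R = 0"
proof -
  define M where "M = 1 + \<bar>P\<bar> + \<bar>R\<bar>"
  have M1: "M \<ge> 1" unfolding M_def by simp
  have M2: "M*M \<ge> M * (1 + \<bar>P\<bar>)" using M1 unfolding M_def by (intro mult_left_mono) auto
  have M3: "M^3 \<ge> M*M" using M1 by (simp add: power3_eq_cube mult_le_cancel_right1 mult_right_le_imp_le)
  have M2': "M*M \<ge> M + \<bar>P\<bar>*M" using M2 by (simp add: algebra_simps)
  have pm: "\<bar>P*M\<bar> = \<bar>P\<bar>*M" using M1 by (simp add: abs_mult)
  have pm1: "P*M \<ge> - (\<bar>P\<bar>*M)" "P*M \<le> \<bar>P\<bar>*M" using pm by linarith+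
  have r: "R \<ge> -\<bar>R\<bar>" "R \<le> \<bar>R\<bar>" by linarith+
  have a1: "M^3 + P*M + R \<ge> 0" using M2' M3 pm1 r M_def by linarith
  have a2: "(-M)^3 + P*(-M) + R \<le> 0" proof -
    have "(-M)^3 = -(M^3)" by simp
    then show ?thesis using M2' M3 pm1 r M_def by linarith
  qed
  have "continuous_on {-M..M} (\<lambda>u. u^3 + P*u + R)" by (intro continuous_intros)
  then obtain u0 where u0: "u0^3 + P*u0 + R = 0"
    using IVT'[of "\<lambda>u. u^3 + P*u + R" "-M" 0 M] a1 a2 M1 by auto
  then have p: "P = -3*u0^2" using h by auto
  then have r: "R = 2*u0^3" using u0 by (simp add: power2_eq_square power3_eq_cube algebra_simps)
  have "(-2*u0)^3 + P*(-2*u0) + R = 0" using p r by (simp add: power2_eq_square power3_eq_cube algebra_simps)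
  then have "3*(-2*u0)^2 + P = 0" using h by blast
  then have "u0 = 0" using p by (simp add: power2_eq_square algebra_simps)
  then show ?thesis using p r by simp
qed

lemma cubic:
  fixes a b c d :: real
  assumes a: "a \<noteq> 0"
    and h: "\<forall>s. a *  s^3 + b *  s^2 + c* s + d = 0 \<longrightarrow> 3*a *  s^2 + 2*b *  s + c = 0"
  shows "27*a^2*d = b^3"
proof -
  define k where "k = b/(3*a)"
  define P where "P = c/a - 3*k^2"
  define R where "R = d/a - k^3 - P*k"
  have hb: "b = 3*a*k" unfolding k_def using a by simp
  have hc: "c = a*(P + 3*k^2)" unfolding P_def using a by (simp add: algebra_simps)
  have hd: "d = a*(R + k^3 + P*k)" unfolding R_def using a by (simp add: algebra_simps)
  have e1: "a * s^3 + b * s^2 + c * s + d = a*((s+k)^3 + P*(s+k) + R)" for s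
    unfolding hb hc hd by (simp add: power2_eq_square power3_eq_cube algebra_simps)
  have e2: "3*a * s^2 + 2*b * s + c = a*(3*(s+k)^2 + P)" for s
    unfolding hb hc by (simp add: power2_eq_square algebra_simps)
  have "\<forall>u. u^3 + P*u + R = 0 \<longrightarrow> 3*u^2 + P = 0"
  proof (intro allI impI)
    fix u assume "u^3 + P*u + R = 0"
    then have "a * (u-k)^3 + b * (u-k)^2 + c*(u-k) + d = 0" using e1[of "u-k"] by simp
    then have "3*a * (u-k)^2 + 2*b * (u-k) + c = 0" using h by blast
    then show "3*u^2 + P = 0" using e2[of "u-k"] a by simp
  qed
  then have "P = 0 \<and> R = 0" by (rule depressed)
  then have "d = a * k^3" unfolding R_def using a by (simp add: field_simps)
  then show ?thesis unfolding k_def using a by (simp add: field_simps power2_eq_square power3_eq_cube)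
qed


lemma mono_single1: "mono (Poly_Mapping.single j 1) y = y $ j"
proof -
  have "mono (Poly_Mapping.single j 1) y = (\<Prod>i\<in>UNIV. if i = j then y $ j else 1)"
    unfolding mono_def by (rule prod.cong) (auto simp: lookup_single)
  then show ?thesis by simp
qed

theorem lemma1:
  fixes f :: "('n::{finite,linorder}) rpoly"
  assumes "homogeneous_of_degree f 3"
    and "irreducible f"
    and "f \<noteq> 0"
  shows "\<exists>x \<in> zero_set f. rpoly_grad f x \<noteq> 0"
proof (rule ccontr)
  assume "\<not> ?thesis"
  then have sing: "rpoly_eval f z = 0 \<Longrightarrow> rpoly_eval (rpoly_pderiv j f) z = 0" for z j
    by (auto simp: zero_set_def rpoly_grad_def vec_eq_iff)
  obtain p where fp: "rpoly_eval f p \<noteq> 0"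
    using identity assms(3) by blast
  define a where "a = rpoly_eval f p"
  define ell :: "'n rpoly" where "ell = (\<Sum>j\<in>UNIV. Poly_Mapping.single (Poly_Mapping.single j 1) (rpoly_eval (rpoly_pderiv j f) p))"
  have evell: "rpoly_eval ell y = (\<Sum>j\<in>UNIV. y$j * rpoly_eval (rpoly_pderiv j f) p)" for y
    unfolding ell_def by (simp add: eval_sum eval_single mono_single1[simplified] mult_ac)
  have key: "rpoly_eval f y = (1/(27*a^2)) * (rpoly_eval ell y)^3" for y
  proof -
    obtain h0 h1 h2 where h: "\<forall>s. rpoly_eval f (s *\<^sub>R p + y) = h0 + h1 * s + h2 * s^2 + a * s^3"
      using cubic_rep[OF assms(1), of p y] unfolding a_def by blast
    have h0: "h0 = rpoly_eval f y" using h[rule_format, of 0] by simp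
    have line: "rpoly_eval f (t *\<^sub>R y + p) = a + h2 * t + h1 * t^2 + h0 * t^3" for t
    proof (cases "t = 0")
      case True then show ?thesis by (simp add: a_def)
    next
      case False
      have "t *\<^sub>R y + p = t *\<^sub>R ((1/t) *\<^sub>R p + y)" using False by (simp add: algebra_simps)
      then have "rpoly_eval f (t *\<^sub>R y + p) = t^3 * rpoly_eval f ((1/t) *\<^sub>R p + y)"
        using eval_homog[OF assms(1)] by simp
      also have "\<dots> = t^3 * (h0 + h1 * (1/t) + h2 * (1/t)^2 + a * (1/t)^3)" using h by simp
      also have "\<dots> = a + h2 * t + h1 * t^2 + h0 * t^3" using False
        by (simp add: field_simps power2_eq_square power3_eq_cube)
      finally show ?thesis .
    qed
    have d1: "((\<lambda>t. rpoly_eval f (t *\<^sub>R y + p)) has_real_derivative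
        (\<Sum>j\<in>UNIV. y$j * rpoly_eval (rpoly_pderiv j f) (0 *\<^sub>R y + p))) (at 0)"
      by (rule eval_deriv)
    have d2: "((\<lambda>t. a + h2 * t + h1 * t^2 + h0 * t^3) has_real_derivative h2) (at 0)"
      by (auto intro!: derivative_eq_intros)
    have "h2 = rpoly_eval ell y"
      using DERIV_unique[OF d2] d1 line evell by simp
    have "\<forall>s. a * s^3 + h2 * s^2 + h1 * s + h0 = 0 \<longrightarrow> 3*a * s^2 + 2*h2 * s + h1 = 0"
    proof (intro allI impI)
      fix s assume s0: "a * s^3 + h2 * s^2 + h1 * s + h0 = 0"
      have e: "((\<lambda>s. rpoly_eval f (s *\<^sub>R p + y)) has_real_derivative
        (\<Sum>j\<in>UNIV. p$j * rpoly_eval (rpoly_pderiv j f) (s *\<^sub>R p + y))) (at s)"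
        by (rule eval_deriv)
      have "rpoly_eval f (s *\<^sub>R p + y) = 0" using h s0 by (simp add: algebra_simps)
      then have "(\<Sum>j\<in>UNIV. p$j * rpoly_eval (rpoly_pderiv j f) (s *\<^sub>R p + y)) = 0"
        using sing by simp
      moreover have "((\<lambda>s. h0 + h1 * s + h2 * s^2 + a * s^3) has_real_derivative
          h1 + 2*h2 * s + 3*a * s^2) (at s)"
        by (auto intro!: derivative_eq_intros)
      ultimately show "3*a * s^2 + 2*h2 * s + h1 = 0"
        using e h DERIV_unique by (simp add: algebra_simps)
    qed
    then have "27*a^2*h0 = h2^3" using cubic fp a_def by blast
    then show ?thesis using h0 \<open>h2 = rpoly_eval ell y\<close> fp a_def by (simp add: field_simps)
  qed
  define A where "A = Poly_Mapping.single 0 (1/(27*a^2)) * ell"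
  define B where "B = ell * ell"
  have "\<forall>y. rpoly_eval (f - A * B) y = 0"
    unfolding A_def B_def by (simp add: eval_diff eval_mult eval_single key mono_def power3_eq_cube)
  then have "f - A * B = 0" by (rule identity)
  then have "f = A * B" by simp
  then have "A dvd 1 \<or> B dvd 1" using assms(2) by (simp add: irreducible_def)
  moreover have "rpoly_eval ell 0 = 0" by (simp add: evell)
  ultimately show False using unit_eval[of A 0] unit_eval[of B 0]
    unfolding A_def B_def by (auto simp: eval_mult)
qed

end
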